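(* Assume the setting in the context. Then the iterates of A-SubSGDP satisfy, for all $t$, $$\mathbb{E}\big[\|w^t-w_*\|^2\big]\le\frac{4\eta^2M}{\mu^2(t+\eta)} .$$
   Context: Setting: $\mathcal Y$ finite; $\mathcal W\subseteq\mathbb{R}^D$ convex; $f_i:\mathcal Y\times\mathbb{R}^D\to\mathbb{R}$ ($i=1,\dots,n$) each convex in $w$, $r$ strongly convex, and each $g_i(w)=r(w)+\max_{y\in\mathcal Y}f_i(y,w)$ is $\mu$-strongly convex; subgradients of $r(w)+f_i(y,w)$ exist and $\sup\{\|v\|^2: v\in\partial[r(w)+f_i(y,w)],\ i,\ y\in\mathcal Y,\ w\in\mathcal W\}\le M$; there is $w_0\in\mathcal W$ with $g_i(w_0)=0$ for all $i$; each $f_i$ has a quantum oracle acting on $O(\mathrm{polylog}(1/\delta,|\mathcal Y|))$ qubits computing $f_i$ with additive error $\delta$. $f=\frac1n\sum_i g_i$ and $w_*=\arg\min_{w\in\mathcal W}f(w)$. Given $\eta\in\mathbb{N}^+$, set $\gamma_t=\frac{\eta}{\mu(t+\eta)}$ and $p_t=\frac1{4\sqrt{t+\eta}}$. A-SubSGDP: given $w^0\in\mathcal W$, an iteration count $T$ and $\eta$, at iteration $t$ choose an index $i$ uniformly at random from $\{1,\dots,n\}$ and compute an estimate $\hat y_i^t$ of a maximizer $\tilde y_i^t\in\arg\max_{y}f_i(y,w^t)$ that is correct with probability at least $1-p_t$; let $\widehat{\partial g_i(w^t)}$ be a subgradient of $w\mapsto r(w)+f_i(\hat y_i^t,w)$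 at $w^t$; set $w^{t+1}=\Pi_{\mathcal W}(w^t-\gamma_t\widehat{\partial g_i(w^t)})$ ($\Pi_{\mathcal W}$ Euclidean projection) and $\bar w_\eta^{t+1}=\frac{t}{t+\eta+1}\bar w_\eta^t+\frac{\eta+1}{t+\eta+1}w^{t+1}$; output $\bar w_\eta^T$. *)

theory Defs
  imports "HOL-Analysis.Analysis" "HOL-Probability.Probability"
begin

definition subdiff :: "('a::real_inner \<Rightarrow> real) \<Rightarrow> 'a \<Rightarrow> 'a set" where
  "subdiff h w = {v. \<forall>u. h w + inner v (u - w) \<le> h u}"

definition strongly_convex_on :: "'a::real_normed_vector set \<Rightarrow> real \<Rightarrow> ('a \<Rightarrow> real) \<Rightarrow> bool" where
  "strongly_convex_on S mu h \<longleftrightarrow>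
     (\<forall>x\<in>S. \<forall>y\<in>S. \<forall>t::real. 0 \<le> t \<longrightarrow> t \<le> 1 \<longrightarrow>
        h (t *\<^sub>R x + (1 - t) *\<^sub>R y)
          \<le> t * h x + (1 - t) * h y - mu / 2 * t * (1 - t) * (norm (x - y))\<^sup>2)"

definition gfun :: "('a \<Rightarrow> real) \<Rightarrow> (nat \<Rightarrow> 'y::finite \<Rightarrow> 'a \<Rightarrow> real) \<Rightarrow> nat \<Rightarrow> 'a \<Rightarrow> real" where
  "gfun r f i w = r w + Max (range (\<lambda>y. f i y w))"

definition Ffun :: "nat \<Rightarrow> ('a \<Rightarrow> real) \<Rightarrow> (nat \<Rightarrow> 'y::finite \<Rightarrow> 'a \<Rightarrow> real) \<Rightarrow> 'a \<Rightarrow> real" where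
  "Ffun n r f w = (\<Sum>i=1..n. gfun r f i w) / real n"

definition argmaxset :: "(nat \<Rightarrow> 'y \<Rightarrow> 'a \<Rightarrow> real) \<Rightarrow> nat \<Rightarrow> 'a \<Rightarrow> 'y set" where
  "argmaxset f i w = {y. \<forall>y'. f i y' w \<le> f i y w}"

definition step_size :: "nat \<Rightarrow> real \<Rightarrow> nat \<Rightarrow> real" where
  "step_size eta mu t = real eta / (mu * (real t + real eta))"

definition fail_prob :: "nat \<Rightarrow> nat \<Rightarrow> real" where
  "fail_prob eta t = 1 / (4 * sqrt (real t + real eta))"

text \<open>Distribution of the iterate w^t of A-SubSGDP.
  est t i w : distribution of the estimate \<hat>y_i^t given the current iterate w;
  sg t i y w : the chosen subgradient of r + f_i(y,.) at w;
  gam : step size sequence.\<close>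
primrec asubsgdp :: "('a::euclidean_space) set \<Rightarrow> nat \<Rightarrow> (nat \<Rightarrow> nat \<Rightarrow> 'a \<Rightarrow> 'y pmf)
    \<Rightarrow> (nat \<Rightarrow> nat \<Rightarrow> 'y \<Rightarrow> 'a \<Rightarrow> 'a) \<Rightarrow> (nat \<Rightarrow> real) \<Rightarrow> 'a \<Rightarrow> nat \<Rightarrow> 'a pmf" where
  "asubsgdp W n est sg gam w0 0 = return_pmf w0"
| "asubsgdp W n est sg gam w0 (Suc t) =
     bind_pmf (asubsgdp W n est sg gam w0 t) (\<lambda>w.
       bind_pmf (pmf_of_set {1..n}) (\<lambda>i.
         bind_pmf (est t i w) (\<lambda>y.
           return_pmf (closest_point W (w - gam t *\<^sub>R sg t i y w)))))"

end

theory Submission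
  imports Defs
begin


lemma lim_le:
  fixes x y c :: real
  assumes "\<And>\<tau>. 0 < \<tau> \<Longrightarrow> \<tau> < 1 \<Longrightarrow> x \<le> y + \<tau> * c"
  shows "x \<le> y"
proof (rule ccontr)
  assume "\<not> x \<le> y"
  hence xy: "x > y" by simp
  show False
  proof (cases "c \<le> 0")
    case True
    have "x \<le> y + (1/2) * c" using assms[of "1/2"] by simp
    with True xy show False by simp
  next
    case False
    define \<tau> where "\<tau> = min (1/2) ((x - y) / (2*c))"
    have "0 < \<tau>" "\<tau> < 1" using False xy by (auto simp: \<tau>_def)
    hence "x \<le> y + \<tau> * c" using assms by blast
    moreover have "\<tau> * c \<le> (x - y)/(2*c) * c" using False
      by (intro mult_right_mono) (auto simp: \<tau>_def)
    moreover have "(x - y)/(2*c) * c = (x-y)/2" using False by (simp add: field_simps)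
    ultimately have "x \<le> y + (x - y)/2" by linarith
    thus False using xy by (simp add: field_simps)
  qed
qed

lemma sc_sub:
  fixes G h :: "'a::real_inner \<Rightarrow> real"
  assumes sc: "strongly_convex_on UNIV mu G" and v: "v \<in> subdiff h w"
    and le: "\<And>u. h u \<le> G u" and eq: "h w = G w"
  shows "G w + inner v (z - w) + mu/2 * (norm (z - w))\<^sup>2 \<le> G z"
proof -
  define K where "K = mu/2 * (norm (z - w))\<^sup>2"
  have "G w + inner v (z - w) + K \<le> G z"
  proof (rule lim_le[where c = K])
    fix \<tau> :: real assume t: "0 < \<tau>" "\<tau> < 1"
    define p where "p = \<tau> *\<^sub>R z + (1 - \<tau>) *\<^sub>R w"
    have pw: "p - w = \<tau> *\<^sub>R (z - w)" by (simp add: p_def algebra_simps)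
    have "G p \<le> \<tau> * G z + (1 - \<tau>) * G w - mu/2 * \<tau> * (1 - \<tau>) * (norm (z - w))\<^sup>2"
      using sc t unfolding strongly_convex_on_def p_def by auto
    moreover have "mu/2 * \<tau> * (1 - \<tau>) * (norm (z - w))\<^sup>2 = \<tau> * (1 - \<tau>) * K"
      by (simp add: K_def mult_ac)
    moreover have "h w + inner v (p - w) \<le> h p" using v unfolding subdiff_def by blast
    moreover have "h p \<le> G p" by (rule le)
    moreover have "inner v (p - w) = \<tau> * inner v (z - w)" by (simp add: pw)
    ultimately have "\<tau> * inner v (z - w) \<le> \<tau> * G z + (1 - \<tau>) * G w - \<tau> * (1 - \<tau>) * K - G w"
      using eq by linarith
    also have "\<dots> = \<tau> * (G z - G w - K + \<tau> * K)"
      by (simp add: algebra_simps)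
    finally have "inner v (z - w) \<le> G z - G w - K + \<tau> * K"
      using t by simp
    thus "G w + inner v (z - w) + K \<le> G z + \<tau> * K" by simp
  qed
  thus ?thesis by (simp add: K_def)
qed

lemma gfun_ge:
  fixes f :: "nat \<Rightarrow> 'y::finite \<Rightarrow> 'a \<Rightarrow> real"
  shows "r u + f i y u \<le> gfun r f i u"
  unfolding gfun_def by (intro add_left_mono Max_ge) auto

lemma gfun_eq:
  fixes f :: "nat \<Rightarrow> 'y::finite \<Rightarrow> 'a \<Rightarrow> real"
  assumes "y \<in> argmaxset f i w"
  shows "gfun r f i w = r w + f i y w"
proof -
  have "Max (range (\<lambda>y. f i y w)) = f i y w"
    by (rule Max_eqI) (use assms in \<open>auto simp: argmaxset_def\<close>)
  thus ?thesis by (simp add: gfun_def)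
qed

lemma argmax_ne:
  fixes f :: "nat \<Rightarrow> 'y::finite \<Rightarrow> 'a \<Rightarrow> real"
  shows "\<exists>y. y \<in> argmaxset f i w"
proof -
  have "Max (range (\<lambda>y. f i y w)) \<in> range (\<lambda>y. f i y w)" by (rule Max_in) auto
  then obtain y where y: "Max (range (\<lambda>y. f i y w)) = f i y w" by (metis rangeE)
  have "\<forall>y'. f i y' w \<le> f i y w"
  proof
    fix y' show "f i y' w \<le> f i y w" unfolding y[symmetric] by (rule Max_ge) auto
  qed
  thus ?thesis unfolding argmaxset_def by blast
qed

lemma weights:
  fixes \<pi> X :: "'y \<Rightarrow> real"
  assumes "finite Y" "\<And>y. y \<in> Y \<Longrightarrow> \<pi> y \<ge> 0" "sum \<pi> Y = 1" "sum \<pi> (Y \<inter> A) \<ge> 1 - p" "p \<ge> 0"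
    "\<And>y. y \<in> Y \<inter> A \<Longrightarrow> X y \<ge> c" "\<And>y. y \<in> Y - A \<Longrightarrow> X y \<ge> - B" "c \<le> B" "B \<ge> 0"
  shows "(\<Sum>y\<in>Y. \<pi> y * X y) \<ge> c - 2 * p * B"
proof -
  have "(\<Sum>y\<in>Y. \<pi> y * X y) = (\<Sum>y\<in>Y \<inter> A. \<pi> y * X y) + (\<Sum>y\<in>Y - A. \<pi> y * X y)"
    using assms(1) by (rule sum.Int_Diff)
  moreover have "(\<Sum>y\<in>Y \<inter> A. \<pi> y * X y) \<ge> (\<Sum>y\<in>Y \<inter> A. \<pi> y * c)"
    using assms by (intro sum_mono mult_left_mono) auto
  moreover have "(\<Sum>y\<in>Y - A. \<pi> y * X y) \<ge> (\<Sum>y\<in>Y - A. \<pi> y * (-B))"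
    using assms by (intro sum_mono mult_left_mono) auto
  moreover have "sum \<pi> Y = sum \<pi> (Y \<inter> A) + sum \<pi> (Y - A)"
    using assms(1) by (rule sum.Int_Diff)
  moreover have "(\<Sum>y\<in>Y \<inter> A. \<pi> y * c) = sum \<pi> (Y \<inter> A) * c" by (simp add: sum_distrib_right)
  moreover have "(\<Sum>y\<in>Y - A. \<pi> y * (-B)) = - (sum \<pi> (Y - A) * B)" by (simp add: sum_distrib_right sum_negf)
  ultimately have main: "(\<Sum>y\<in>Y. \<pi> y * X y) \<ge> sum \<pi> (Y \<inter> A) * c - sum \<pi> (Y - A) * B"
    by linarith
  have R: "sum \<pi> (Y - A) = 1 - sum \<pi> (Y \<inter> A)" using assms(3) \<open>sum \<pi> Y = _ + _\<close> by linarith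
  have "sum \<pi> (Y \<inter> A) * c - sum \<pi> (Y - A) * B = c - (1 - sum \<pi> (Y \<inter> A)) * (c + B)"
    unfolding R by (simp add: algebra_simps)
  with main have main: "(\<Sum>y\<in>Y. \<pi> y * X y) \<ge> c - (1 - sum \<pi> (Y \<inter> A)) * (c + B)" by simp
  have q: "0 \<le> 1 - sum \<pi> (Y \<inter> A)" "1 - sum \<pi> (Y \<inter> A) \<le> p"
    using assms \<open>sum \<pi> Y = _ + _\<close> sum_nonneg[of "Y - A" \<pi>] by auto
  show ?thesis
  proof (cases "c + B \<ge> 0")
    case True
    have "(1 - sum \<pi> (Y \<inter> A)) * (c + B) \<le> p * (c + B)" using q True by (intro mult_right_mono) auto
    also have "\<dots> \<le> p * (2*B)" using assms True by (intro mult_left_mono) auto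
    finally show ?thesis using main by simp
  next
    case False
    hence "(1 - sum \<pi> (Y \<inter> A)) * (c + B) \<le> 0" using q by (simp add: mult_nonneg_nonpos)
    moreover have "0 \<le> p * B" using False assms by simp
    ultimately show ?thesis using main by simp
  qed
qed

lemma final_arith:
  fixes s eta m e :: real
  assumes "eta \<ge> 1" "s \<ge> eta" "m \<ge> 0" "0 \<le> e" "e \<le> 4 * eta\<^sup>2 * m / s"
  shows "(1 - (2*eta - 1/4)/s) * e + 2 * eta\<^sup>2 * m / s\<^sup>2 \<le> 4 * eta\<^sup>2 * m / (s + 1)"
proof -
  have s1: "s \<ge> 1" using assms by simp
  have k0: "eta\<^sup>2 * m \<ge> 0" using assms by simp
  show ?thesis
  proof (cases "1 - (2*eta - 1/4)/s \<ge> 0")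
    case False
    hence "(1 - (2*eta - 1/4)/s) * e \<le> 0" using assms by (simp add: mult_nonpos_nonneg)
    moreover have "2 * eta\<^sup>2 * m / s\<^sup>2 \<le> 4 * eta\<^sup>2 * m / (s + 1)"
    proof -
      have "1 * (s * 4) \<le> s * (s * 4)" using s1 by (intro mult_right_mono) auto
      hence "2 + s * 2 \<le> s * (s * 4)" using s1 by linarith
      hence "2 / s\<^sup>2 \<le> 4 / (s + 1)" using s1
        by (simp add: field_simps power2_eq_square)
      hence "eta\<^sup>2 * m * (2 / s\<^sup>2) \<le> eta\<^sup>2 * m * (4 / (s+1))" using k0 by (rule mult_left_mono)
      thus ?thesis by (simp add: mult_ac)
    qed
    ultimately show ?thesis by simp
  next
    case True
    have "(1 - (2*eta - 1/4)/s) * e \<le> (1 - (2*eta - 1/4)/s) * (4 * eta\<^sup>2 * m / s)"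
      using True assms by (intro mult_left_mono) auto
    moreover have "(1 - (2*eta - 1/4)/s) * (4 * eta\<^sup>2 * m / s) + 2 * eta\<^sup>2 * m / s\<^sup>2 = 4 * eta\<^sup>2 * m / (s + 1) + eta\<^sup>2 * m * ((4 * s / (s + 1) + 3 - 8*eta) / s\<^sup>2)"
      using s1 by (simp add: divide_simps power2_eq_square) (simp add: algebra_simps)
    moreover have "(4 * s / (s + 1) + 3 - 8*eta) / s\<^sup>2 \<le> 0"
    proof -
      have "4 * s / (s + 1) \<le> 4" using s1 by (simp add: field_simps)
      thus ?thesis using assms by (intro divide_nonpos_nonneg) auto
    qed
    hence "eta\<^sup>2 * m * ((4 * s / (s + 1) + 3 - 8*eta) / s\<^sup>2) \<le> 0" by (rule mult_nonneg_nonpos[OF k0])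
    ultimately show ?thesis by linarith
  qed
qed




lemma amgm_raw:
  fixes q mu sM b eta :: real
  assumes "q > 0" "mu > 0"
  shows "eta * sM * b / (mu * (q * q) * q) \<le> b * b / (4 * (q * q)) + eta * eta * (sM * sM) / (mu * mu) / ((q * q) * (q * q))"
proof -
  define X where "X = b / (2 * q)"
  define Y where "Y = eta * sM / (mu * (q * q))"
  have "eta * sM * b / (mu * (q * q) * q) = 2 * (X * Y)"
    unfolding X_def Y_def using assms by (simp add: divide_simps)
  also have "0 \<le> (X - Y) * (X - Y)" by simp
  hence "2 * (X * Y) \<le> X * X + Y * Y" by (simp add: algebra_simps)
  also have "X * X + Y * Y = b * b / (4 * (q * q)) + eta * eta * (sM * sM) / (mu * mu) / ((q * q) * (q * q))"
    unfolding X_def Y_def using assms by (simp add: divide_simps)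
  finally show ?thesis .
qed

lemma amgm_step:
  fixes s mu M b eta :: real
  assumes "s > 0" "mu > 0" "M \<ge> 0"
  shows "eta * sqrt M * b / (mu * s * sqrt s) \<le> b * b / (4 * s) + eta * eta * M / (mu * mu) / (s * s)"
proof -
  have q: "sqrt s * sqrt s = s" "sqrt M * sqrt M = M" using assms by simp_all
  have "sqrt s > 0" using assms by simp
  from amgm_raw[OF this assms(2), where sM="sqrt M" and b=b and eta=eta] show ?thesis by (simp only: q)
qed

lemma norm_sq_expand:
  fixes a g :: "'a::real_inner"
  shows "(norm (a - c *\<^sub>R g))\<^sup>2 = (norm a)\<^sup>2 - 2 * c * inner g a + c\<^sup>2 * (norm g)\<^sup>2"
proof -
  have "(norm (a - c *\<^sub>R g))\<^sup>2 = inner (a - c *\<^sub>R g) (a - c *\<^sub>R g)" by (rule power2_norm_eq_inner)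
  also have "\<dots> = inner a a - 2 * c * inner g a + c * c * inner g g"
    by (simp add: inner_diff_left inner_diff_right inner_commute algebra_simps)
  finally show ?thesis unfolding power2_norm_eq_inner by (simp add: power2_eq_square)
qed

lemma proj_step:
  fixes W :: "'a::euclidean_space set"
  assumes "convex W" "closed W" "w \<in> W" "ws \<in> W" "(norm g)\<^sup>2 \<le> M" "\<gamma> \<ge> 0"
  shows "(norm (closest_point W (w - \<gamma> *\<^sub>R g) - ws))\<^sup>2
           \<le> (norm (w - ws))\<^sup>2 - 2 * \<gamma> * inner g (w - ws) + \<gamma>\<^sup>2 * M"
proof -
  have ne: "W \<noteq> {}" using assms by auto
  have "dist (closest_point W (w - \<gamma> *\<^sub>R g)) (closest_point W ws) \<le> dist (w - \<gamma> *\<^sub>R g) ws"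
    by (rule closest_point_lipschitz[OF assms(1,2) ne])
  hence "norm (closest_point W (w - \<gamma> *\<^sub>R g) - ws) \<le> norm ((w - ws) - \<gamma> *\<^sub>R g)"
    using closest_point_self[OF assms(4)] by (simp add: dist_norm algebra_simps)
  hence "(norm (closest_point W (w - \<gamma> *\<^sub>R g) - ws))\<^sup>2 \<le> (norm ((w - ws) - \<gamma> *\<^sub>R g))\<^sup>2"
    by (intro power_mono) auto
  also have "\<dots> = (norm (w - ws))\<^sup>2 - 2 * \<gamma> * inner g (w - ws) + \<gamma>\<^sup>2 * (norm g)\<^sup>2"
    by (rule norm_sq_expand)
  also have "\<dots> \<le> (norm (w - ws))\<^sup>2 - 2 * \<gamma> * inner g (w - ws) + \<gamma>\<^sup>2 * M"
    using assms(5) by (intro add_left_mono mult_left_mono) auto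
  finally show ?thesis .
qed




lemma expect_return: "measure_pmf.expectation (return_pmf x) (h :: 'a \<Rightarrow> real) = h x"
  by (simp add: return_pmf.rep_eq integral_return)

locale setting =
  fixes W :: "'a::euclidean_space set" and n :: nat and f :: "nat \<Rightarrow> 'y::finite \<Rightarrow> 'a \<Rightarrow> real"
    and r :: "'a \<Rightarrow> real" and mu M :: real and eta :: nat and w_star winit :: 'a
    and est :: "nat \<Rightarrow> nat \<Rightarrow> 'a \<Rightarrow> 'y pmf" and sg :: "nat \<Rightarrow> nat \<Rightarrow> 'y \<Rightarrow> 'a \<Rightarrow> 'a"
  assumes n_pos: "n \<ge> 1" and W_convex: "convex W" and W_closed: "closed W" and mu_pos: "mu > 0"
    and g_sc: "\<And>i. i \<in> {1..n} \<Longrightarrow> strongly_convex_on UNIV mu (gfun r f i)"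
    and sg_bound: "\<And>i y w v. i \<in> {1..n} \<Longrightarrow> w \<in> W \<Longrightarrow>
                          v \<in> subdiff (\<lambda>u. r u + f i y u) w \<Longrightarrow> (norm v)\<^sup>2 \<le> M"
    and ws: "w_star \<in> W" and ws_min: "\<And>w. w \<in> W \<Longrightarrow> Ffun n r f w_star \<le> Ffun n r f w"
    and eta_pos: "eta \<ge> 1" and winit: "winit \<in> W"
    and est_correct: "\<And>t i w. i \<in> {1..n} \<Longrightarrow>
          measure_pmf.prob (est t i w) (argmaxset f i w) \<ge> 1 - fail_prob eta t"
    and sg_subgrad: "\<And>t i y w. i \<in> {1..n} \<Longrightarrow> sg t i y w \<in> subdiff (\<lambda>u. r u + f i y u) w"
begin

definition hh :: "'a \<Rightarrow> real" where "hh w = (norm (w - w_star))\<^sup>2"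

definition step where
  "step t w = bind_pmf (pmf_of_set {1..n}) (\<lambda>i. bind_pmf (est t i w) (\<lambda>y.
      return_pmf (closest_point W (w - step_size eta mu t *\<^sub>R sg t i y w))))"

abbreviation "PP t \<equiv> asubsgdp W n est sg (step_size eta mu) winit t"

lemma P_Suc: "PP (Suc t) = bind_pmf (PP t) (step t)"
  by (simp add: step_def[abs_def])

lemma Wne: "W \<noteq> {}" using winit by auto

lemma n_ne: "{1..n} \<noteq> {}" using n_pos by auto

lemma step_supp: "finite (set_pmf (step t w)) \<and> set_pmf (step t w) \<subseteq> W"
  using n_pos by (auto simp: step_def closest_point_in_set[OF W_closed Wne])

lemma P_supp: "finite (set_pmf (PP t)) \<and> set_pmf (PP t) \<subseteq> W"
proof (induction t)
  case 0
  then show ?case using winit by simp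
next
  case (Suc t)
  then show ?case using step_supp unfolding P_Suc by auto
qed

lemma M_nonneg: "M \<ge> 0"
proof -
  have i1: "1 \<in> {1..n}" using n_pos by simp
  have "(norm (sg 0 1 y winit))\<^sup>2 \<le> M" for y
    by (rule sg_bound[OF i1 winit sg_subgrad[OF i1]])
  thus ?thesis by (meson order_trans zero_le_power2)
qed

lemma sg_norm: "i \<in> {1..n} \<Longrightarrow> w \<in> W \<Longrightarrow> norm (sg t i y w) \<le> sqrt M"
  by (rule real_le_rsqrt, rule sg_bound[where y=y], assumption, assumption, rule sg_subgrad, assumption)

lemma inner_upper: "i \<in> {1..n} \<Longrightarrow> w \<in> W \<Longrightarrow> inner (sg t i y w) (w - w_star) \<le> sqrt M * norm (w - w_star)"
  using norm_cauchy_schwarz[of "sg t i y w" "w - w_star"] sg_norm[of i w t y]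
  by (meson mult_right_mono norm_ge_zero order_trans)

lemma inner_lower: "i \<in> {1..n} \<Longrightarrow> w \<in> W \<Longrightarrow> inner (sg t i y w) (w - w_star) \<ge> - (sqrt M * norm (w - w_star))"
proof -
  assume a: "i \<in> {1..n}" "w \<in> W"
  have "inner (- sg t i y w) (w - w_star) \<le> norm (- sg t i y w) * norm (w - w_star)"
    by (rule norm_cauchy_schwarz)
  also have "\<dots> \<le> sqrt M * norm (w - w_star)"
    using sg_norm[OF a, of t y] by (simp add: mult_right_mono)
  finally show ?thesis by simp
qed

lemma c_lower:
  assumes i: "i \<in> {1..n}" and y: "y \<in> argmaxset f i w"
  shows "inner (sg t i y w) (w - w_star) \<ge> gfun r f i w - gfun r f i w_star + mu/2 * hh w"
proof -
  have "gfun r f i w + inner (sg t i y w) (w_star - w) + mu/2 * (norm (w_star - w))\<^sup>2 \<le> gfun r f i w_star"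
    by (rule sc_sub[OF g_sc[OF i] sg_subgrad[OF i]]) (simp_all add: gfun_ge gfun_eq[OF y])
  moreover have e1: "inner (sg t i y w) (w_star - w) = - inner (sg t i y w) (w - w_star)"
    by (simp add: inner_diff_right)
  moreover have e2: "norm (w_star - w) = norm (w - w_star)" by (rule norm_minus_commute)
  ultimately have "gfun r f i w - inner (sg t i y w) (w - w_star) + mu/2 * hh w \<le> gfun r f i w_star"
    unfolding hh_def by (simp only: e1 e2 diff_conv_add_uminus)
  thus ?thesis by linarith
qed

lemma Fgap:
  assumes w: "w \<in> W"
  shows "mu/2 * hh w \<le> Ffun n r f w - Ffun n r f w_star"
proof -
  define Gs where "Gs u = (\<Sum>i=1..n. gfun r f i u)" for u
  define K where "K = mu/2 * hh w"
  have nr: "real n > 0" using n_pos by simp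
  have FG: "Ffun n r f u = Gs u / real n" for u by (simp add: Ffun_def Gs_def)
  show ?thesis unfolding K_def[symmetric]
  proof (rule lim_le[where c = K])
    fix \<tau> :: real assume t: "0 < \<tau>" "\<tau> < 1"
    define p where "p = \<tau> *\<^sub>R w + (1 - \<tau>) *\<^sub>R w_star"
    have pW: "p \<in> W" unfolding p_def by (rule convexD[OF W_convex w ws]) (use t in auto)
    have each: "gfun r f i p \<le> \<tau> * gfun r f i w + (1 - \<tau>) * gfun r f i w_star - \<tau> * (1 - \<tau>) * K"
      if i: "i \<in> {1..n}" for i
    proof -
      have "gfun r f i p \<le> \<tau> * gfun r f i w + (1 - \<tau>) * gfun r f i w_star - mu/2 * \<tau> * (1 - \<tau>) * (norm (w - w_star))\<^sup>2"
        using g_sc[OF i] t unfolding strongly_convex_on_def p_def by auto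
      moreover have "mu/2 * \<tau> * (1 - \<tau>) * (norm (w - w_star))\<^sup>2 = \<tau> * (1 - \<tau>) * K"
        by (simp add: K_def hh_def mult_ac)
      ultimately show ?thesis by linarith
    qed
    have "Gs p \<le> (\<Sum>i=1..n. \<tau> * gfun r f i w + (1 - \<tau>) * gfun r f i w_star - \<tau> * (1 - \<tau>) * K)"
      unfolding Gs_def by (rule sum_mono) (rule each)
    also have "\<dots> = \<tau> * Gs w + (1 - \<tau>) * Gs w_star - real n * (\<tau> * (1 - \<tau>) * K)"
      by (simp add: Gs_def sum.distrib sum_subtractf sum_distrib_left)
    finally have h1: "Gs p \<le> \<tau> * Gs w + (1 - \<tau>) * Gs w_star - real n * (\<tau> * (1 - \<tau>) * K)" .
    have "Gs w_star / real n \<le> Gs p / real n" using ws_min[OF pW] by (simp add: FG)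
    hence h2: "Gs w_star \<le> Gs p" using nr by (simp add: divide_right_mono_neg divide_le_cancel)
    have "\<tau> * (real n * (1 - \<tau>) * K) \<le> \<tau> * (Gs w - Gs w_star)"
      using h1 h2 by (simp add: algebra_simps)
    hence "real n * (1 - \<tau>) * K \<le> Gs w - Gs w_star" using t by simp
    hence "(1 - \<tau>) * K \<le> (Gs w - Gs w_star) / real n" using nr by (simp add: pos_le_divide_eq mult_ac)
    also have "\<dots> = Ffun n r f w - Ffun n r f w_star" by (simp add: FG diff_divide_distrib)
    finally show "K \<le> Ffun n r f w - Ffun n r f w_star + \<tau> * K" by (simp add: algebra_simps)
  qed
qed

end



context setting begin

lemma csum:
  assumes w: "w \<in> W"
  shows "(\<Sum>i=1..n. gfun r f i w - gfun r f i w_star + mu/2 * hh w) / real n \<ge> mu * hh w"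
proof -
  have nr: "real n > 0" using n_pos by simp
  have "(\<Sum>i=1..n. gfun r f i w - gfun r f i w_star + mu/2 * hh w) / real n
      = (Ffun n r f w - Ffun n r f w_star) + mu/2 * hh w"
    using nr by (simp add: Ffun_def sum.distrib sum_subtractf add_divide_distrib diff_divide_distrib)
  thus ?thesis using Fgap[OF w] by simp
qed

lemma diam:
  assumes w: "w \<in> W"
  shows "hh w \<le> 4 * M / mu\<^sup>2"
proof -
  define b where "b = norm (w - w_star)"
  have hb: "hh w = b\<^sup>2" by (simp add: hh_def b_def)
  have b0: "b \<ge> 0" by (simp add: b_def)
  have each: "gfun r f i w - gfun r f i w_star \<le> sqrt M * b" if i: "i \<in> {1..n}" for i
  proof -
    obtain y where y: "y \<in> argmaxset f i w" using argmax_ne[of f i w] by blast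
    have "gfun r f i w - gfun r f i w_star + mu/2 * hh w \<le> sqrt M * b"
      using c_lower[OF i y, of 0] inner_upper[OF i w, of 0 y] unfolding b_def by linarith
    moreover have "0 \<le> mu/2 * hh w" using mu_pos by (simp add: hh_def)
    ultimately show ?thesis by linarith
  qed
  have "Ffun n r f w - Ffun n r f w_star = (\<Sum>i=1..n. gfun r f i w - gfun r f i w_star) / real n"
    by (simp add: Ffun_def sum_subtractf diff_divide_distrib)
  also have "\<dots> \<le> (\<Sum>i=1..n. sqrt M * b) / real n"
    using n_pos by (intro divide_right_mono sum_mono each) auto
  also have "\<dots> = sqrt M * b" using n_pos by simp
  finally have "mu/2 * b\<^sup>2 \<le> sqrt M * b" using Fgap[OF w] hb by simp
  show ?thesis
  proof (cases "b = 0")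
    case True
    thus ?thesis using hb M_nonneg mu_pos by simp
  next
    case False
    hence bp: "b > 0" using b0 by simp
    have "b * (mu * b) \<le> b * (2 * sqrt M)"
      using \<open>mu/2 * b\<^sup>2 \<le> sqrt M * b\<close> by (simp add: power2_eq_square algebra_simps)
    hence "mu * b \<le> 2 * sqrt M" using bp by simp
    hence "(mu * b)\<^sup>2 \<le> (2 * sqrt M)\<^sup>2" using mu_pos b0 by (intro power_mono) auto
    hence "mu\<^sup>2 * b\<^sup>2 \<le> 4 * M" using M_nonneg by (simp add: power_mult_distrib)
    hence "b\<^sup>2 \<le> 4 * M / mu\<^sup>2" using mu_pos by (simp add: pos_le_divide_eq mult.commute)
    thus ?thesis using hb by simp
  qed
qed


lemma step_bound:
  assumes w: "w \<in> W"
  shows "measure_pmf.expectation (step t w) hh \<le> (1 - (2 * real eta - 1/4) / (real t + real eta)) * hh w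
            + 2 * (real eta)\<^sup>2 * (M / mu\<^sup>2) / (real t + real eta)\<^sup>2"
proof -
  define s where "s = real t + real eta"
  define \<gamma> where "\<gamma> = step_size eta mu t"
  define p where "p = fail_prob eta t"
  define b where "b = norm (w - w_star)"
  define B where "B = sqrt M * b"
  define d where "d = w - w_star"
  define q where "q i y = closest_point W (w - \<gamma> *\<^sub>R sg t i y w)" for i y
  define c where "c i = gfun r f i w - gfun r f i w_star + mu/2 * hh w" for i
  define X where "X i y = inner (sg t i y w) d" for i y
  have nr: "real n > 0" using n_pos by simp
  have s_pos: "s > 0" using eta_pos by (simp add: s_def)
  have \<gamma>_eq: "\<gamma> = real eta / (mu * s)" by (simp add: \<gamma>_def step_size_def s_def)
  have \<gamma>0: "\<gamma> \<ge> 0" using mu_pos s_pos by (simp add: \<gamma>_eq)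
  have p_eq: "p = 1 / (4 * sqrt s)" by (simp add: p_def fail_prob_def s_def)
  have p0: "p \<ge> 0" using s_pos by (simp add: p_eq)
  have B0: "B \<ge> 0" using M_nonneg by (simp add: B_def b_def)
  have hb: "hh w = b * b" by (simp add: hh_def b_def power2_eq_square)
  have Ei: "measure_pmf.expectation (bind_pmf (est t i w) (\<lambda>y. return_pmf (q i y))) hh
              \<le> hh w + \<gamma>\<^sup>2 * M - 2 * \<gamma> * (c i - 2 * p * B)" if i: "i \<in> {1..n}" for i
  proof -
    let ?\<pi> = "pmf (est t i w)"
    have "measure_pmf.expectation (bind_pmf (est t i w) (\<lambda>y. return_pmf (q i y))) hh
        = (\<Sum>y\<in>UNIV. ?\<pi> y *\<^sub>R measure_pmf.expectation (return_pmf (q i y)) hh)"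
      by (rule pmf_expectation_bind) auto
    also have "\<dots> = (\<Sum>y\<in>UNIV. ?\<pi> y * hh (q i y))" by (simp add: expect_return)
    also have "\<dots> \<le> (\<Sum>y\<in>UNIV. ?\<pi> y * (hh w - 2 * \<gamma> * X i y + \<gamma>\<^sup>2 * M))"
    proof (rule sum_mono, rule mult_left_mono)
      fix y
      show "hh (q i y) \<le> hh w - 2 * \<gamma> * X i y + \<gamma>\<^sup>2 * M"
        unfolding hh_def q_def X_def d_def
        by (rule proj_step[OF W_convex W_closed w ws sg_bound[OF i w sg_subgrad[OF i]] \<gamma>0])
    qed simp
    also have "\<dots> = (hh w + \<gamma>\<^sup>2 * M) * (\<Sum>y\<in>UNIV. ?\<pi> y) - 2 * \<gamma> * (\<Sum>y\<in>UNIV. ?\<pi> y * X i y)"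
      by (simp add: algebra_simps sum.distrib sum_subtractf sum_distrib_left sum_distrib_right)
    finally have E1: "measure_pmf.expectation (bind_pmf (est t i w) (\<lambda>y. return_pmf (q i y))) hh
        \<le> (hh w + \<gamma>\<^sup>2 * M) * (\<Sum>y\<in>UNIV. ?\<pi> y) - 2 * \<gamma> * (\<Sum>y\<in>UNIV. ?\<pi> y * X i y)" .
    have one: "(\<Sum>y\<in>UNIV. ?\<pi> y) = 1" by (rule sum_pmf_eq_1) auto
    have W: "(\<Sum>y\<in>UNIV. ?\<pi> y * X i y) \<ge> c i - 2 * p * B"
    proof (rule weights[where A = "argmaxset f i w"])
      show "finite (UNIV :: 'y set)" by simp
      show "\<And>y. y \<in> UNIV \<Longrightarrow> ?\<pi> y \<ge> 0" by simp
      show "sum ?\<pi> UNIV = 1" by (rule one)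
      have "measure_pmf.prob (est t i w) (argmaxset f i w) = sum ?\<pi> (argmaxset f i w)"
        by (rule measure_measure_pmf_finite) simp
      thus "sum ?\<pi> (UNIV \<inter> argmaxset f i w) \<ge> 1 - p" using est_correct[OF i, of t w] by (simp add: p_def)
      show "p \<ge> 0" by (rule p0)
      show "\<And>y. y \<in> UNIV \<inter> argmaxset f i w \<Longrightarrow> X i y \<ge> c i"
        unfolding X_def c_def d_def using c_lower[OF i] by blast
      show "\<And>y. y \<in> UNIV - argmaxset f i w \<Longrightarrow> X i y \<ge> - B"
        unfolding X_def B_def b_def d_def using inner_lower[OF i w] by blast
      obtain y0 where y0: "y0 \<in> argmaxset f i w" using argmax_ne[of f i w] by blast
      show "c i \<le> B" using c_lower[OF i y0, of t] inner_upper[OF i w, of t y0] unfolding c_def B_def b_def by linarith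
      show "B \<ge> 0" by (rule B0)
    qed
    have "2 * \<gamma> * (c i - 2 * p * B) \<le> 2 * \<gamma> * (\<Sum>y\<in>UNIV. ?\<pi> y * X i y)"
      using W \<gamma>0 by (intro mult_left_mono) auto
    thus ?thesis using E1 unfolding one by argo
  qed
  define K0 where "K0 = hh w + \<gamma>\<^sup>2 * M + 4 * \<gamma> * p * B"
  have "measure_pmf.expectation (step t w) hh
     = (\<Sum>i\<in>{1..n}. measure_pmf.expectation (bind_pmf (est t i w) (\<lambda>y. return_pmf (q i y))) hh /\<^sub>R real (card {1..n}))"
    unfolding step_def q_def \<gamma>_def by (rule pmf_expectation_bind_pmf_of_set) (use n_pos in \<open>auto simp: n_ne\<close>)
  also have "\<dots> \<le> (\<Sum>i\<in>{1..n}. (K0 - 2 * \<gamma> * c i) / real n)"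
  proof (rule sum_mono)
    fix i assume i: "i \<in> {1..n}"
    have "measure_pmf.expectation (bind_pmf (est t i w) (\<lambda>y. return_pmf (q i y))) hh \<le> K0 - 2 * \<gamma> * c i"
      using Ei[OF i] unfolding K0_def by (simp add: algebra_simps)
    thus "measure_pmf.expectation (bind_pmf (est t i w) (\<lambda>y. return_pmf (q i y))) hh /\<^sub>R real (card {1..n})
        \<le> (K0 - 2 * \<gamma> * c i) / real n"
      using nr by (simp add: divide_right_mono divide_inverse_commute)
  qed
  also have "\<dots> = K0 - 2 * \<gamma> * ((\<Sum>i=1..n. c i) / real n)"
  proof -
    have "(\<Sum>i\<in>{1..n}. (K0 - 2 * \<gamma> * c i) / real n) = (\<Sum>i\<in>{1..n}. K0 - 2 * \<gamma> * c i) / real n"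
      by (simp add: sum_divide_distrib)
    also have "(\<Sum>i\<in>{1..n}. K0 - 2 * \<gamma> * c i) = real n * K0 - 2 * \<gamma> * (\<Sum>i=1..n. c i)"
      by (simp add: sum_subtractf sum_distrib_left)
    finally show ?thesis using nr by (simp add: diff_divide_distrib)
  qed
  finally have E2: "measure_pmf.expectation (step t w) hh \<le> K0 - 2 * \<gamma> * ((\<Sum>i=1..n. c i) / real n)" .
  have "mu * hh w \<le> (\<Sum>i=1..n. c i) / real n" using csum[OF w] by (simp add: c_def)
  hence "2 * \<gamma> * (mu * hh w) \<le> 2 * \<gamma> * ((\<Sum>i=1..n. c i) / real n)" using \<gamma>0 by (intro mult_left_mono) auto
  with E2 have E3: "measure_pmf.expectation (step t w) hh \<le> K0 - 2 * \<gamma> * (mu * hh w)" by linarith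
  have a1: "4 * \<gamma> * p * B = real eta * sqrt M * b / (mu * s * sqrt s)"
    using s_pos mu_pos by (simp add: \<gamma>_eq p_eq B_def divide_simps)
  have a2: "real eta * sqrt M * b / (mu * s * sqrt s) \<le> b * b / (4 * s) + real eta * real eta * M / (mu * mu) / (s * s)"
    by (rule amgm_step[OF s_pos mu_pos M_nonneg])
  have a3: "\<gamma>\<^sup>2 * M = real eta * real eta * M / (mu * mu) / (s * s)"
    by (simp add: \<gamma>_eq power2_eq_square divide_simps)
  have a4: "2 * \<gamma> * (mu * hh w) = (2 * real eta / s) * hh w"
    using mu_pos by (simp add: \<gamma>_eq divide_simps)
  have a5: "(1 - (2 * real eta - 1/4) / s) * hh w = hh w - (2 * real eta / s) * hh w + b * b / (4 * s)"
    using s_pos unfolding hb by (simp add: divide_simps) (simp add: algebra_simps)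
  have a6: "2 * (real eta)\<^sup>2 * (M / mu\<^sup>2) / s\<^sup>2 = 2 * (real eta * real eta * M / (mu * mu) / (s * s))"
    by (simp add: power2_eq_square)
  have "measure_pmf.expectation (step t w) hh \<le> (1 - (2 * real eta - 1/4) / s) * hh w + 2 * (real eta)\<^sup>2 * (M / mu\<^sup>2) / s\<^sup>2"
    using E3 a1 a2 a3 a4 a5 a6 unfolding K0_def by linarith
  thus ?thesis by (simp add: s_def)
qed

end



context setting begin

lemma main_bound: "measure_pmf.expectation (PP t) hh \<le> 4 * (real eta)\<^sup>2 * M / (mu\<^sup>2 * (real t + real eta))"
proof (induction t)
  case 0
  have e: "real eta \<ge> 1" using eta_pos by simp
  have m0: "4 * M / mu\<^sup>2 \<ge> 0" using M_nonneg by simp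
  have "measure_pmf.expectation (PP 0) hh = hh winit" by (simp add: expect_return)
  also have "\<dots> \<le> 4 * M / mu\<^sup>2" by (rule diam[OF winit])
  also have "\<dots> \<le> real eta * (4 * M / mu\<^sup>2)" using mult_right_mono[OF e m0] by simp
  also have "\<dots> = 4 * (real eta)\<^sup>2 * M / (mu\<^sup>2 * (real 0 + real eta))"
    using e by (simp add: power2_eq_square divide_simps)
  finally show ?case .
next
  case (Suc t)
  define S where "S = set_pmf (PP t)"
  have fS: "finite S" "S \<subseteq> W" using P_supp[of t] by (auto simp: S_def)
  define e where "e = measure_pmf.expectation (PP t) hh"
  define s where "s = real t + real eta"
  define \<kappa> where "\<kappa> = 1 - (2 * real eta - 1/4) / s"
  define K where "K = 2 * (real eta)\<^sup>2 * (M / mu\<^sup>2) / s\<^sup>2"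
  have e_sum: "e = (\<Sum>a\<in>S. pmf (PP t) a * hh a)"
    unfolding e_def S_def by (subst integral_measure_pmf[of "set_pmf (PP t)"]) (use fS in \<open>auto simp: S_def\<close>)
  have e0: "e \<ge> 0" unfolding e_sum by (intro sum_nonneg mult_nonneg_nonneg) (auto simp: hh_def)
  have one: "(\<Sum>a\<in>S. pmf (PP t) a) = 1" by (rule sum_pmf_eq_1) (use fS in \<open>auto simp: S_def\<close>)
  have "measure_pmf.expectation (PP (Suc t)) hh = (\<Sum>a\<in>S. pmf (PP t) a *\<^sub>R measure_pmf.expectation (step t a) hh)"
    unfolding P_Suc S_def by (rule pmf_expectation_bind) (use fS step_supp in \<open>auto simp: S_def\<close>)
  also have "\<dots> \<le> (\<Sum>a\<in>S. pmf (PP t) a * (\<kappa> * hh a + K))"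
  proof (rule sum_mono)
    fix a assume a: "a \<in> S"
    have "measure_pmf.expectation (step t a) hh \<le> \<kappa> * hh a + K"
      using step_bound[of a t] a fS unfolding \<kappa>_def K_def s_def by auto
    thus "pmf (PP t) a *\<^sub>R measure_pmf.expectation (step t a) hh \<le> pmf (PP t) a * (\<kappa> * hh a + K)"
      by (simp add: mult_left_mono)
  qed
  also have "\<dots> = \<kappa> * e + K * (\<Sum>a\<in>S. pmf (PP t) a)"
    unfolding e_sum by (simp add: algebra_simps sum.distrib sum_distrib_left sum_distrib_right)
  also have "\<dots> = \<kappa> * e + K" unfolding one by simp
  also have "\<dots> \<le> 4 * (real eta)\<^sup>2 * (M / mu\<^sup>2) / (s + 1)"
    unfolding \<kappa>_def K_def
  proof (rule final_arith)
    show "1 \<le> real eta" using eta_pos by simp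
    show "real eta \<le> s" by (simp add: s_def)
    show "0 \<le> M / mu\<^sup>2" using M_nonneg by simp
    show "0 \<le> e" by (rule e0)
    have "e \<le> 4 * (real eta)\<^sup>2 * M / (mu\<^sup>2 * (real t + real eta))" using Suc.IH by (simp add: e_def)
    also have "\<dots> = 4 * (real eta)\<^sup>2 * (M / mu\<^sup>2) / s" by (simp add: s_def)
    finally show "e \<le> 4 * (real eta)\<^sup>2 * (M / mu\<^sup>2) / s" .
  qed
  also have "\<dots> = 4 * (real eta)\<^sup>2 * M / (mu\<^sup>2 * (real (Suc t) + real eta))"
    by (simp add: s_def add_ac)
  finally show ?case .
qed

end

theorem mainTheorem13:
  fixes W :: "(real ^ 'd) set"
    and n :: nat
    and f :: "nat \<Rightarrow> 'y::finite \<Rightarrow> real ^ 'd \<Rightarrow> real"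
    and r :: "real ^ 'd \<Rightarrow> real"
    and mu M :: real
    and eta :: nat
    and w_star winit :: "real ^ 'd"
    and est :: "nat \<Rightarrow> nat \<Rightarrow> real ^ 'd \<Rightarrow> 'y pmf"
    and sg :: "nat \<Rightarrow> nat \<Rightarrow> 'y \<Rightarrow> real ^ 'd \<Rightarrow> real ^ 'd"
  assumes n_pos: "n \<ge> 1"
    and W_convex: "convex W" and W_closed: "closed W"
    and f_convex: "\<And>i y. i \<in> {1..n} \<Longrightarrow> convex_on UNIV (f i y)"
    and r_strongly_convex: "\<exists>c>0. strongly_convex_on UNIV c r"
    and mu_pos: "mu > 0"
    and g_strongly_convex: "\<And>i. i \<in> {1..n} \<Longrightarrow> strongly_convex_on UNIV mu (gfun r f i)"
    and subgrad_exist: "\<And>i y w. i \<in> {1..n} \<Longrightarrow> subdiff (\<lambda>u. r u + f i y u) w \<noteq> {}"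
    and subgrad_bound: "\<And>i y w v. i \<in> {1..n} \<Longrightarrow> w \<in> W \<Longrightarrow>
                          v \<in> subdiff (\<lambda>u. r u + f i y u) w \<Longrightarrow> (norm v)\<^sup>2 \<le> M"
    and zero_point: "\<exists>w0\<in>W. \<forall>i\<in>{1..n}. gfun r f i w0 = 0"
    and w_star: "w_star \<in> W" "\<And>w. w \<in> W \<Longrightarrow> Ffun n r f w_star \<le> Ffun n r f w"
    and eta_pos: "eta \<ge> 1"
    and winit: "winit \<in> W"
    and est_correct: "\<And>t i w. i \<in> {1..n} \<Longrightarrow>
          measure_pmf.prob (est t i w) (argmaxset f i w) \<ge> 1 - fail_prob eta t"
    and sg_subgrad: "\<And>t i y w. i \<in> {1..n} \<Longrightarrow> sg t i y w \<in> subdiff (\<lambda>u. r u + f i y u) w"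
  shows "\<forall>t. measure_pmf.expectation
              (asubsgdp W n est sg (step_size eta mu) winit t)
              (\<lambda>w. (norm (w - w_star))\<^sup>2)
           \<le> 4 * (real eta)\<^sup>2 * M / (mu\<^sup>2 * (real t + real eta))"
proof -
  interpret S: setting W n f r mu M eta w_star winit est sg
    by unfold_locales (fact n_pos W_convex W_closed mu_pos g_strongly_convex subgrad_bound w_star eta_pos winit est_correct sg_subgrad)+
  show ?thesis using S.main_bound unfolding S.hh_def by blast
qed

end
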